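(* Let $H$ be a $d\times d$ Hermitian matrix with eigendecomposition $H=U\,\mathrm{diag}(\mathbf{q})\,U^\dagger$, where $U$ is unitary and $\mathbf{q}\in\mathbb{R}^d$, and let $t\ge 1/d$. Then $$\min_{\rho\in S^t}\|\rho-H\|_2^2=\min_{\mathbf{p}\in P(t)}\|\mathbf{p}-\mathbf{q}\|_2^2,$$ and if $\mathbf{p}^*$ is a minimizer of the right-hand side then $U\,\mathrm{diag}(\mathbf{p}^* )\,U^\dagger$ is a minimizer of the left-hand side.
   Context: $\|A\|_2=\sqrt{\mathrm{Tr}(A^\dagger A)}$ is the Frobenius norm and $\|\mathbf{x}\|_2$ the Euclidean norm. $S^t=\{\rho\succeq 0,\ \mathrm{Tr}\rho=1,\ \mathrm{Tr}(\rho^2)\le t\}$ (on $\mathbb{C}^d$). $P(t)=\{\mathbf{p}\in\mathbb{R}^d:\mathbf{p}\ge0,\ \sum_i\mathbf{p}_i=1,\ \mathbf{p}\cdot\mathbf{p}\le t\}$. *)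

theory Defs
  imports "HOL-Analysis.Analysis"
begin

text \<open>d x d complex matrices are modelled as complex^'n^'n with d = CARD('n).\<close>

definition conj_transpose :: "complex^'n^'m \<Rightarrow> complex^'m^'n" where
  "conj_transpose A = (\<chi> i j. cnj (A $ j $ i))"

definition hermitian :: "complex^'n^'n \<Rightarrow> bool" where
  "hermitian A \<longleftrightarrow> conj_transpose A = A"

definition unitary :: "complex^'n^'n \<Rightarrow> bool" where
  "unitary U \<longleftrightarrow> U ** conj_transpose U = mat 1 \<and> conj_transpose U ** U = mat 1"

definition diag_mat :: "real^'n \<Rightarrow> complex^'n^'n" where
  "diag_mat q = (\<chi> i j. if i = j then complex_of_real (q $ i) else 0)"

definition psd :: "complex^'n^'n \<Rightarrow> bool" where
  "psd A \<longleftrightarrow> (\<forall>x::complex^'n.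
      let v = (\<Sum>i\<in>UNIV. cnj (x $ i) * (A *v x) $ i) in Im v = 0 \<and> Re v \<ge> 0)"

definition frob_norm :: "complex^'n^'n \<Rightarrow> real" where
  "frob_norm A = sqrt (Re (trace (conj_transpose A ** A)))"

definition S_set :: "real \<Rightarrow> (complex^'n^'n) set" where
  "S_set t = {\<rho>. psd \<rho> \<and> trace \<rho> = 1 \<and> Re (trace (\<rho> ** \<rho>)) \<le> t}"

definition P_set :: "real \<Rightarrow> (real^'n) set" where
  "P_set t = {p. (\<forall>i. p $ i \<ge> 0) \<and> (\<Sum>i\<in>UNIV. p $ i) = 1 \<and> p \<bullet> p \<le> t}"

end

theory Submission
  imports Defs
begin

type_synonym 'n cmat = "complex^'n^'n"

lemma mat_sub_ldistrib: "(A::complex^'n^'n) ** (B - C) = A ** B - A ** C"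
  by (vector matrix_matrix_mult_def sum_subtractf[symmetric] field_simps)

lemma mat_sub_rdistrib: "((B::complex^'n^'n) - C) ** A = B ** A - C ** A"
  by (vector matrix_matrix_mult_def sum_subtractf[symmetric] field_simps)

lemma ct_mult: "conj_transpose ((A::complex^'n^'n) ** B) = conj_transpose B ** conj_transpose A"
  by (vector conj_transpose_def matrix_matrix_mult_def mult.commute)

lemma ct_ct[simp]: "conj_transpose (conj_transpose (A::complex^'n^'n)) = A"
  by (vector conj_transpose_def)

lemma ct_diag[simp]: "conj_transpose (diag_mat p) = diag_mat p"
  by (vector conj_transpose_def diag_mat_def)

lemma diag_sub: "diag_mat p - diag_mat q = diag_mat (p - q)"
  by (vector diag_mat_def)

lemma diag_mult: "diag_mat p ** diag_mat q = diag_mat (\<chi> i. p$i * q$i)"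
proof -
  have "(\<Sum>k\<in>UNIV. (if i = k then complex_of_real (p$i) else 0) * (if k = j then complex_of_real (q$k) else 0))
     = (if i = j then complex_of_real (p$i * q$i) else 0)" for i j
  proof -
    have "(\<Sum>k\<in>UNIV. (if i = k then complex_of_real (p$i) else 0) * (if k = j then complex_of_real (q$k) else 0))
      = (\<Sum>k\<in>UNIV. if k = i then complex_of_real (p$i) * (if i = j then complex_of_real (q$i) else 0) else 0)"
      by (rule sum.cong) auto
    also have "\<dots> = (if i = j then complex_of_real (p$i * q$i) else 0)"
      by (subst sum.delta) auto
    finally show ?thesis .
  qed
  then show ?thesis unfolding diag_mat_def matrix_matrix_mult_def
    by (simp add: vec_eq_iff)
qed

lemma trace_diag: "trace (diag_mat p) = of_real (\<Sum>i\<in>UNIV. p$i)"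
  by (simp add: trace_def diag_mat_def)

lemma frob_sq: "frob_norm (A::complex^'n^'n) ^ 2 = (\<Sum>i\<in>UNIV. \<Sum>k\<in>UNIV. (cmod (A$k$i))^2)"
proof -
  have r: "Re (z * cnj z) = (cmod z)^2" for z by (simp add: complex_mult_cnj cmod_power2)
  have "trace (conj_transpose A ** A) = (\<Sum>i\<in>UNIV. \<Sum>k\<in>UNIV. A$k$i * cnj (A$k$i))"
    unfolding trace_def conj_transpose_def matrix_matrix_mult_def
    by (simp add: mult.commute)
  then have e: "Re (trace (conj_transpose A ** A)) = (\<Sum>i\<in>UNIV. \<Sum>k\<in>UNIV. (cmod (A$k$i))^2)"
    by (simp only: Re_sum r)
  have nn: "(\<Sum>i\<in>UNIV. \<Sum>k\<in>UNIV. (cmod (A$k$i))^2) \<ge> 0" by (intro sum_nonneg) auto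
  show ?thesis unfolding frob_norm_def e using nn by (rule real_sqrt_pow2)
qed

lemma frob_unitary:
  assumes "unitary U"
  shows "frob_norm (U ** X ** conj_transpose U) = frob_norm X"
proof -
  let ?W = "conj_transpose U"
  have UW: "U ** ?W = mat 1" and WU: "?W ** U = mat 1" using assms unfolding unitary_def by auto
  have "conj_transpose (U ** X ** ?W) ** (U ** X ** ?W) = U ** (conj_transpose X ** X) ** ?W"
    by (simp add: ct_mult matrix_mul_assoc) (metis WU matrix_mul_assoc matrix_mul_rid)
  moreover have "trace (U ** (conj_transpose X ** X) ** ?W) = trace (conj_transpose X ** X)"
    by (metis WU matrix_mul_assoc matrix_mul_rid trace_mul_sym)
  ultimately show ?thesis unfolding frob_norm_def by simp
qed

definition qf :: "complex^'n^'n \<Rightarrow> complex^'n \<Rightarrow> complex" where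
  "qf A x = (\<Sum>i\<in>UNIV. cnj (x $ i) * (A *v x) $ i)"

lemma psd_qf: "psd A \<longleftrightarrow> (\<forall>x. Im (qf A x) = 0 \<and> Re (qf A x) \<ge> 0)"
  unfolding psd_def qf_def Let_def by simp

lemma adj: "(\<Sum>i\<in>UNIV. cnj (x $ i) * (conj_transpose B *v y) $ i)
   = (\<Sum>k\<in>UNIV. cnj ((B *v x) $ k) * y $ k)"
proof -
  have "(\<Sum>i\<in>UNIV. cnj (x $ i) * (conj_transpose B *v y) $ i)
     = (\<Sum>i\<in>UNIV. \<Sum>k\<in>UNIV. cnj (x $ i) * cnj (B$k$i) * y$k)"
    unfolding conj_transpose_def matrix_vector_mult_def
    by (simp add: sum_distrib_left mult.assoc)
  also have "\<dots> = (\<Sum>k\<in>UNIV. \<Sum>i\<in>UNIV. cnj (x $ i) * cnj (B$k$i) * y$k)"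
    by (rule sum.swap)
  also have "\<dots> = (\<Sum>k\<in>UNIV. cnj ((B *v x) $ k) * y $ k)"
    unfolding matrix_vector_mult_def
    by (simp add: sum_distrib_right sum_distrib_left mult_ac)
  finally show ?thesis .
qed

lemma qf_conj: "qf (conj_transpose B ** A ** B) x = qf A (B *v x)"
  unfolding qf_def
  by (simp add: matrix_vector_mul_assoc[symmetric] adj)


lemma vec_real_inner: "(p::real^'n) \<bullet> p = (\<Sum>i\<in>UNIV. (p$i)^2)"
  by (simp add: inner_vec_def power2_eq_square)

lemma norm_sq_vec: "norm (p::real^'n) ^ 2 = (\<Sum>i\<in>UNIV. (p$i)^2)"
  by (simp add: power2_norm_eq_inner vec_real_inner)

lemma qf_axis: "qf A (axis i 1) = A$i$i"
proof -
  have "qf A (axis i 1) = (\<Sum>k\<in>UNIV. if k = i then (A *v axis i 1) $ k else 0)"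
    unfolding qf_def by (rule sum.cong) (auto simp: axis_def)
  also have "\<dots> = (A *v axis i 1) $ i" by (subst sum.delta) auto
  also have "\<dots> = (\<Sum>k\<in>UNIV. if k = i then A$i$k else 0)"
    unfolding matrix_vector_mult_def vec_lambda_beta by (rule sum.cong) (auto simp: axis_def)
  also have "\<dots> = A$i$i" by (subst sum.delta) auto
  finally show ?thesis .
qed

lemma psd_diag: assumes "psd A" shows "Im (A$i$i) = 0" "Re (A$i$i) \<ge> 0"
  using assms qf_axis[of A i] unfolding psd_qf by metis+

lemma qf_two:
  fixes A :: "complex^'n^'n"
  assumes "i \<noteq> j"
  shows "qf A ((\<chi> k. if k = i then 1 else if k = j then c else 0) :: complex^'n)
     = A$i$i + c * A$i$j + cnj c * A$j$i + cnj c * c * A$j$j"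
proof -
  let ?x = "(\<chi> k. if k = i then 1 else if k = j then c else 0) :: complex^'n"
  have mv: "(A *v ?x) $ m = A$m$i + c * A$m$j" for m
  proof -
    have "(A *v ?x) $ m = (\<Sum>k\<in>UNIV. (if k = i then A$m$i else 0) + (if k = j then c * A$m$j else 0))"
      unfolding matrix_vector_mult_def vec_lambda_beta by (rule sum.cong) (use assms in auto)
    also have "\<dots> = A$m$i + c * A$m$j"
      by (simp only: sum.distrib) (simp add: sum.delta)
    finally show ?thesis .
  qed
  have "qf A ?x = (\<Sum>k\<in>UNIV. (if k = i then (A$i$i + c * A$i$j) else 0) + (if k = j then cnj c * (A$j$i + c * A$j$j) else 0))"
    unfolding qf_def mv by (rule sum.cong) (use assms in auto)
  also have "\<dots> = A$i$i + c * A$i$j + cnj c * (A$j$i + c * A$j$j)"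
    by (simp only: sum.distrib) (simp add: sum.delta)
  finally show ?thesis by (simp add: algebra_simps)
qed

lemma psd_herm:
  assumes "psd A" shows "A$j$i = cnj (A$i$j)"
proof (cases "i = j")
  case True
  then show ?thesis using psd_diag[OF assms, of i] by (simp add: complex_eq_iff)
next
  case False
  have di: "Im (A$i$i) = 0" "Im (A$j$j) = 0" using psd_diag[OF assms] by auto
  have "Im (qf A (\<chi> k. if k = i then 1 else if k = j then 1 else 0)) = 0"
    using assms unfolding psd_qf by blast
  then have h1: "Im (A$i$j) + Im (A$j$i) = 0" using di by (simp add: qf_two[OF False])
  have "Im (qf A (\<chi> k. if k = i then 1 else if k = j then \<i> else 0)) = 0"
    using assms unfolding psd_qf by blast
  then have h2: "Re (A$i$j) - Re (A$j$i) = 0" using di by (simp add: qf_two[OF False])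
  show ?thesis using h1 h2 by (simp add: complex_eq_iff)
qed

lemma trace_sq_herm:
  assumes "psd A"
  shows "Re (trace (A ** A)) = (\<Sum>i\<in>UNIV. \<Sum>j\<in>UNIV. (cmod (A$i$j))^2)"
proof -
  have r: "Re (z * cnj z) = (cmod z)^2" for z by (simp add: complex_mult_cnj cmod_power2)
  have "trace (A ** A) = (\<Sum>i\<in>UNIV. \<Sum>j\<in>UNIV. A$i$j * cnj (A$i$j))"
    unfolding trace_def matrix_matrix_mult_def vec_lambda_beta
    by (intro sum.cong refl) (metis psd_herm[OF assms])
  then show ?thesis by (simp only: Re_sum r)
qed

lemma pinch:
  fixes A :: "complex^'n^'n"
  assumes "A \<in> S_set t"
  shows "(\<chi> i. Re (A$i$i)) \<in> P_set t \<and>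
         norm ((\<chi> i. Re (A$i$i)) - q) ^ 2 \<le> frob_norm (A - diag_mat q) ^ 2"
proof -
  let ?p = "(\<chi> i. Re (A$i$i)) :: real^'n"
  have psd: "psd A" and tr: "trace A = 1" and sq: "Re (trace (A ** A)) \<le> t"
    using assms unfolding S_set_def by auto
  have nonneg: "\<forall>i. ?p $ i \<ge> 0" using psd_diag[OF psd] by simp
  have sum1: "(\<Sum>i\<in>UNIV. ?p $ i) = 1"
    using arg_cong[OF tr, of Re] unfolding trace_def by (simp add: Re_sum)
  have cd: "(cmod (A$i$i))^2 = (?p$i)^2" for i
    using psd_diag[OF psd, of i] by (simp add: cmod_power2)
  have "?p \<bullet> ?p = (\<Sum>i\<in>UNIV. (cmod (A$i$i))^2)" by (simp add: vec_real_inner cd)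
  also have "\<dots> \<le> (\<Sum>i\<in>UNIV. \<Sum>j\<in>UNIV. (cmod (A$i$j))^2)"
    by (intro sum_mono member_le_sum) auto
  also have "\<dots> \<le> t" using sq trace_sq_herm[OF psd] by simp
  finally have pp: "?p \<bullet> ?p \<le> t" .
  have cd2: "((?p - q)$i)^2 = (cmod ((A - diag_mat q)$i$i))^2" for i
    using psd_diag[OF psd, of i] by (simp add: cmod_power2 diag_mat_def)
  have "norm (?p - q) ^ 2 = (\<Sum>i\<in>UNIV. (cmod ((A - diag_mat q)$i$i))^2)"
    unfolding norm_sq_vec by (simp only: cd2)
  also have "\<dots> \<le> (\<Sum>i\<in>UNIV. \<Sum>k\<in>UNIV. (cmod ((A - diag_mat q)$k$i))^2)"
    by (intro sum_mono member_le_sum) auto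
  also have "\<dots> = frob_norm (A - diag_mat q) ^ 2" by (simp add: frob_sq)
  finally show ?thesis using nonneg sum1 pp unfolding P_set_def by auto
qed

lemma qf_diag: "qf (diag_mat p) y = of_real (\<Sum>i\<in>UNIV. p$i * (cmod (y$i))^2)"
proof -
  have mv: "(diag_mat p *v y) $ i = of_real (p$i) * y$i" for i
  proof -
    have "(diag_mat p *v y) $ i = (\<Sum>k\<in>UNIV. if k = i then of_real (p$i) * y$i else 0)"
      unfolding matrix_vector_mult_def diag_mat_def vec_lambda_beta by (rule sum.cong) auto
    then show ?thesis by (simp add: sum.delta)
  qed
  have "qf (diag_mat p) y = (\<Sum>i\<in>UNIV. of_real (p$i * (cmod (y$i))^2))"
    unfolding qf_def mv
  proof (rule sum.cong)
    fix i
    have "cnj (y $ i) * (complex_of_real (p $ i) * y $ i) = of_real (p$i) * (y$i * cnj (y$i))"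
      by (simp add: algebra_simps)
    also have "\<dots> = of_real (p$i * (cmod (y$i))^2)"
      by (simp only: complex_norm_square[symmetric] of_real_mult)
    finally show "cnj (y $ i) * (complex_of_real (p $ i) * y $ i) = of_real (p$i * (cmod (y$i))^2)" .
  qed simp
  then show ?thesis by simp
qed

lemma frob_diag: "frob_norm (diag_mat v) ^ 2 = norm v ^ 2"
proof -
  have "(\<Sum>k\<in>UNIV. (cmod (diag_mat v $k$i))^2) = (v$i)^2" for i
  proof -
    have "(\<Sum>k\<in>UNIV. (cmod (diag_mat v $k$i))^2) = (\<Sum>k\<in>UNIV. if k = i then (v$i)^2 else 0)"
      by (rule sum.cong) (auto simp: diag_mat_def)
    then show ?thesis by (simp add: sum.delta)
  qed
  then show ?thesis by (simp add: frob_sq norm_sq_vec)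
qed


lemma P_compact: "compact (P_set t :: (real^'n) set)"
proof -
  have eq: "P_set t = (\<Inter>i. {p::real^'n. p$i \<ge> 0}) \<inter> {p. (\<Sum>i\<in>UNIV. p $ i) = 1} \<inter> {p. p \<bullet> p \<le> t}"
    unfolding P_set_def by auto
  have "closed (P_set t :: (real^'n) set)"
    unfolding eq
    by (intro closed_Int closed_INT ballI closed_Collect_le closed_Collect_eq continuous_intros)
  moreover have "bounded (P_set t :: (real^'n) set)"
    unfolding bounded_iff
  proof (intro exI ballI)
    fix p :: "real^'n" assume "p \<in> P_set t"
    then have "p \<bullet> p \<le> t" unfolding P_set_def by auto
    then show "norm p \<le> sqrt t" by (simp add: norm_eq_sqrt_inner)
  qed
  ultimately show ?thesis by (simp add: compact_eq_bounded_closed)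
qed

lemma P_nonempty:
  assumes "t \<ge> 1 / real CARD('n)"
  shows "(\<chi> i. 1 / real CARD('n)) \<in> (P_set t :: (real^'n) set)"
proof -
  let ?u = "(\<chi> i. 1 / real CARD('n)) :: real^'n"
  have c: "real CARD('n) > 0" by simp
  have "?u \<bullet> ?u = real CARD('n) * (1 / real CARD('n))^2" by (simp add: vec_real_inner)
  also have "\<dots> = 1 / real CARD('n)" using c by (simp add: power2_eq_square)
  finally have "?u \<bullet> ?u \<le> t" using assms by simp
  moreover have "(\<Sum>i\<in>UNIV. ?u $ i) = 1" using c by simp
  ultimately show ?thesis unfolding P_set_def by auto
qed

theorem mainTheorem4:
  fixes H U :: "complex^'n^'n" and q :: "real^'n" and t :: real
  assumes "hermitian H"
    and "unitary U"
    and "H = U ** diag_mat q ** conj_transpose U"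
    and "t \<ge> 1 / real CARD('n)"
  shows "(\<exists>\<rho>\<in>S_set t. \<forall>\<sigma>\<in>S_set t. frob_norm (\<rho> - H) ^ 2 \<le> frob_norm (\<sigma> - H) ^ 2)
    \<and> (\<exists>p\<in>P_set t. \<forall>p'\<in>P_set t. norm (p - q) ^ 2 \<le> norm (p' - q) ^ 2)
    \<and> (INF \<rho>\<in>S_set t. frob_norm (\<rho> - H) ^ 2) = (INF p\<in>P_set t. norm (p - q) ^ 2)
    \<and> (\<forall>p\<in>P_set t. (\<forall>p'\<in>P_set t. norm (p - q) ^ 2 \<le> norm (p' - q) ^ 2) \<longrightarrow>
         U ** diag_mat p ** conj_transpose U \<in> S_set t \<and>
         (\<forall>\<sigma>\<in>S_set t. frob_norm (U ** diag_mat p ** conj_transpose U - H) ^ 2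
                        \<le> frob_norm (\<sigma> - H) ^ 2))"
proof -
  define W where "W = conj_transpose U"
  have UW: "U ** W = mat 1" and WU: "W ** U = mat 1" using assms(2) unfolding unitary_def W_def by auto
  have ctW: "conj_transpose W = U" unfolding W_def by simp
  have c1: "X ** W ** U = X" for X :: "complex^'n^'n"
    by (metis WU matrix_mul_assoc matrix_mul_rid)
  have c2: "X ** U ** W = X" for X :: "complex^'n^'n"
    by (metis UW matrix_mul_assoc matrix_mul_rid)
  have H: "H = U ** diag_mat q ** W" using assms(3) unfolding W_def .
  have conjsub: "U ** X ** W - U ** Y ** W = U ** (X - Y) ** W" for X Y :: "complex^'n^'n"
    by (simp add: mat_sub_ldistrib mat_sub_rdistrib)
  have A: "U ** diag_mat p ** W \<in> S_set t \<and> frob_norm (U ** diag_mat p ** W - H) ^ 2 = norm (p - q) ^ 2"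
    if p: "p \<in> P_set t" for p
  proof -
    let ?D = "diag_mat p"
    have pn: "\<forall>i. p$i \<ge> 0" and ps: "(\<Sum>i\<in>UNIV. p$i) = 1" and pp: "p \<bullet> p \<le> t"
      using p unfolding P_set_def by auto
    have "psd (U ** ?D ** W)"
      unfolding psd_qf
    proof
      fix x
      have "qf (U ** ?D ** W) x = qf ?D (W *v x)"
        using qf_conj[of W ?D x] ctW by simp
      also have "\<dots> = of_real (\<Sum>i\<in>UNIV. p$i * (cmod ((W *v x)$i))^2)" by (rule qf_diag)
      finally have e: "qf (U ** ?D ** W) x = of_real (\<Sum>i\<in>UNIV. p$i * (cmod ((W *v x)$i))^2)" .
      have "(\<Sum>i\<in>UNIV. p$i * (cmod ((W *v x)$i))^2) \<ge> 0"
        using pn by (intro sum_nonneg mult_nonneg_nonneg) auto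
      then show "Im (qf (U ** ?D ** W) x) = 0 \<and> 0 \<le> Re (qf (U ** ?D ** W) x)"
        unfolding e by simp
    qed
    moreover have "trace (U ** ?D ** W) = 1"
    proof -
      have "trace (U ** ?D ** W) = trace (W ** (U ** ?D))" by (rule trace_mul_sym)
      also have "\<dots> = trace ?D" by (simp add: matrix_mul_assoc WU)
      finally show ?thesis using ps by (simp add: trace_diag)
    qed
    moreover have "Re (trace ((U ** ?D ** W) ** (U ** ?D ** W))) \<le> t"
    proof -
      have "(U ** ?D ** W) ** (U ** ?D ** W) = U ** (?D ** ?D) ** W"
        by (simp add: matrix_mul_assoc c1)
      then have "trace ((U ** ?D ** W) ** (U ** ?D ** W)) = trace (W ** (U ** (?D ** ?D)))"
        using trace_mul_sym by metis
      also have "\<dots> = trace (?D ** ?D)" by (simp add: matrix_mul_assoc WU)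
      also have "\<dots> = of_real (p \<bullet> p)" by (simp add: diag_mult trace_diag inner_vec_def)
      finally show ?thesis using pp by simp
    qed
    moreover have "frob_norm (U ** ?D ** W - H) ^ 2 = norm (p - q) ^ 2"
    proof -
      have "U ** ?D ** W - H = U ** diag_mat (p - q) ** W" by (simp only: H conjsub diag_sub)
      then show ?thesis using frob_unitary[OF assms(2), of "diag_mat (p - q)"] frob_diag[of "p - q"]
        unfolding W_def by simp
    qed
    ultimately show ?thesis unfolding S_set_def by auto
  qed
  have B: "\<exists>p\<in>P_set t. norm (p - q) ^ 2 \<le> frob_norm (\<sigma> - H) ^ 2" if s: "\<sigma> \<in> S_set t" for \<sigma>
  proof -
    let ?A = "W ** \<sigma> ** U"
    have psd: "psd \<sigma>" and tr: "trace \<sigma> = 1" and sq: "Re (trace (\<sigma> ** \<sigma>)) \<le> t"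
      using s unfolding S_set_def by auto
    have "psd ?A" unfolding psd_qf
    proof
      fix x
      have "qf ?A x = qf \<sigma> (U *v x)" using qf_conj[of U \<sigma> x] unfolding W_def .
      then show "Im (qf ?A x) = 0 \<and> 0 \<le> Re (qf ?A x)" using psd unfolding psd_qf by simp
    qed
    moreover have "trace ?A = 1"
    proof -
      have "trace ?A = trace (U ** (W ** \<sigma>))" by (rule trace_mul_sym)
      also have "\<dots> = trace \<sigma>" by (simp add: matrix_mul_assoc UW)
      finally show ?thesis using tr by simp
    qed
    moreover have "Re (trace (?A ** ?A)) \<le> t"
    proof -
      have "?A ** ?A = W ** (\<sigma> ** \<sigma>) ** U"
        by (simp add: matrix_mul_assoc c2)
      then have "trace (?A ** ?A) = trace (U ** (W ** (\<sigma> ** \<sigma>)))"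
        using trace_mul_sym by metis
      also have "\<dots> = trace (\<sigma> ** \<sigma>)" by (simp add: matrix_mul_assoc UW)
      finally show ?thesis using sq by simp
    qed
    ultimately have AS: "?A \<in> S_set t" unfolding S_set_def by auto
    have sig: "\<sigma> = U ** ?A ** W" by (simp add: matrix_mul_assoc UW c2)
    have "frob_norm (\<sigma> - H) = frob_norm (?A - diag_mat q)"
    proof -
      have "\<sigma> - H = U ** (?A - diag_mat q) ** W" by (subst sig, simp only: H conjsub)
      then show ?thesis using frob_unitary[OF assms(2), of "?A - diag_mat q"] unfolding W_def by simp
    qed
    then show ?thesis using pinch[OF AS, of q] by auto
  qed
  obtain p0 where p0: "p0 \<in> P_set t" "\<forall>p'\<in>P_set t. norm (p0 - q) ^ 2 \<le> norm (p' - q) ^ 2"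
  proof -
    have ne: "P_set t \<noteq> ({} :: (real^'n) set)" using P_nonempty[OF assms(4)] by blast
    have co: "continuous_on (P_set t) (\<lambda>p::real^'n. norm (p - q) ^ 2)"
      by (intro continuous_intros)
    show ?thesis using continuous_attains_inf[OF P_compact ne co] that by blast
  qed
  have minS: "U ** diag_mat p ** W \<in> S_set t \<and>
         (\<forall>\<sigma>\<in>S_set t. frob_norm (U ** diag_mat p ** W - H) ^ 2 \<le> frob_norm (\<sigma> - H) ^ 2)"
    if "p \<in> P_set t" "\<forall>p'\<in>P_set t. norm (p - q) ^ 2 \<le> norm (p' - q) ^ 2" for p
  proof (intro conjI ballI)
    show "U ** diag_mat p ** W \<in> S_set t" using A[OF that(1)] by simp
    fix \<sigma> :: "complex^'n^'n" assume "\<sigma> \<in> S_set t"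
    then obtain p' where p': "p' \<in> P_set t" "norm (p' - q) ^ 2 \<le> frob_norm (\<sigma> - H) ^ 2" using B by blast
    have "frob_norm (U ** diag_mat p ** W - H) ^ 2 = norm (p - q) ^ 2" using A[OF that(1)] by simp
    also have "\<dots> \<le> norm (p' - q) ^ 2" using that(2) p'(1) by blast
    also have "\<dots> \<le> frob_norm (\<sigma> - H) ^ 2" by (rule p'(2))
    finally show "frob_norm (U ** diag_mat p ** W - H) ^ 2 \<le> frob_norm (\<sigma> - H) ^ 2" .
  qed
  have inf1: "(INF \<rho>\<in>S_set t. frob_norm (\<rho> - H) ^ 2) = frob_norm (U ** diag_mat p0 ** W - H) ^ 2"
    using minS[OF p0] by (intro cInf_eq_minimum) auto
  have inf2: "(INF p\<in>P_set t. norm (p - q) ^ 2) = norm (p0 - q) ^ 2"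
    using p0 by (intro cInf_eq_minimum) auto
  show ?thesis
    using minS p0 inf1 inf2 A[OF p0(1)] unfolding W_def by metis
qed

end
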